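(* Let $\mathbb{D}$ be $[0,1]^2$ or a mesh and let $A,B:\mathbb{D}\to\mathbb{R}$ satisfy (Q1) $A\le B$ and (Q2) $L^{(A,B)}(R)\ge0$ for all $R\in\mathfrak{R}$. If $$\min\{P_O^{(A,B)}(\mathbf{x}),\,B(\mathbf{x})-A(\mathbf{x})\}=0\quad\text{for all }\mathbf{x}\in\mathbb{D},$$ then $V_A(R)\ge0$ for every rectangle $R$ with corners in $\mathbb{D}$.
   Context: A rectangle is $[s_1,s_2]\times[t_1,t_2]$ with $s_1<s_2$, $t_1<t_2$ and corners in $\mathbb{D}$; main corners: southwest and northeast; opposite corners: southeast and northwest; $V_A(R)=A(s_1,t_1)+A(s_2,t_2)-A(s_2,t_1)-A(s_1,t_2)$. $\mathfrak{R}$ is the set of finite formal unions $R=R_1\sqcup\dots\sqcup R_n$ of rectangles (repetitions allowed), with multiplicity $m_R(\mathbf{y})=\sum_i m_{R_i}(\mathbf{y})$, where $m_{R_i}(\mathbf{y})$ is $1$ at main corners, $-1$ at opposite corners, $0$ elsewhere. $L^{(A,B)}(R)=\sum_{m_R(\mathbf{y})>0}B(\mathbf{y})m_R(\mathbf{y})+\sum_{m_R(\mathbf{y})<0}A(\mathbf{y})m_R(\mathbf{y})$; $P_O^{(A,B)}(\mathbf{x})=\inf\{L^{(A,B)}(R)/(-m_R(\mathbf{x})):R\in\mathfrak{R},m_R(\mathbf{x})<0\}$ with $\inf\emptyset=+\infty$. *)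

theory Defs
  imports "HOL-Analysis.Analysis" "HOL-Library.Extended_Real"
begin

type_synonym point = "real \<times> real"
(* a rectangle [s1,s2] x [t1,t2] is encoded as ((s1,s2),(t1,t2)) *)
type_synonym rect = "(real \<times> real) \<times> (real \<times> real)"

definition is_mesh :: "point set \<Rightarrow> bool" where
  "is_mesh D \<longleftrightarrow> (\<exists>S T. finite S \<and> finite T \<and> S \<subseteq> {0..1} \<and> T \<subseteq> {0..1}
      \<and> 0 \<in> S \<and> 1 \<in> S \<and> 0 \<in> T \<and> 1 \<in> T \<and> D = S \<times> T)"

definition is_rect :: "point set \<Rightarrow> rect \<Rightarrow> bool" where
  "is_rect D R \<longleftrightarrow> (case R of ((s1,s2),(t1,t2)) \<Rightarrow>
      s1 < s2 \<and> t1 < t2 \<and> (s1,t1) \<in> D \<and> (s2,t2) \<in> D \<and> (s2,t1) \<in> D \<and> (s1,t2) \<in> D)"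

definition V :: "(point \<Rightarrow> real) \<Rightarrow> rect \<Rightarrow> real" where
  "V A R = (case R of ((s1,s2),(t1,t2)) \<Rightarrow>
      A (s1,t1) + A (s2,t2) - A (s2,t1) - A (s1,t2))"

definition mult1 :: "rect \<Rightarrow> point \<Rightarrow> int" where
  "mult1 R y = (case R of ((s1,s2),(t1,t2)) \<Rightarrow>
      (if y = (s1,t1) \<or> y = (s2,t2) then 1
       else if y = (s2,t1) \<or> y = (s1,t2) then -1 else 0))"

(* a formal union R_1 \<sqcup> ... \<sqcup> R_n of rectangles (repetitions allowed) is a list *)
definition multR :: "rect list \<Rightarrow> point \<Rightarrow> int" where
  "multR Rs y = (\<Sum>R\<leftarrow>Rs. mult1 R y)"

definition corners :: "rect list \<Rightarrow> point set" where
  "corners Rs = (\<Union>R\<in>set Rs. case R of ((s1,s2),(t1,t2)) \<Rightarrow>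
      {(s1,t1),(s2,t2),(s2,t1),(s1,t2)})"

definition is_union :: "point set \<Rightarrow> rect list \<Rightarrow> bool" where
  "is_union D Rs \<longleftrightarrow> Rs \<noteq> [] \<and> (\<forall>R\<in>set Rs. is_rect D R)"

(* L^(A,B)(R); the nonzero multiplicities occur only at corners *)
definition L :: "(point \<Rightarrow> real) \<Rightarrow> (point \<Rightarrow> real) \<Rightarrow> rect list \<Rightarrow> real" where
  "L A B Rs = (\<Sum>y\<in>{y\<in>corners Rs. multR Rs y > 0}. B y * of_int (multR Rs y))
            + (\<Sum>y\<in>{y\<in>corners Rs. multR Rs y < 0}. A y * of_int (multR Rs y))"

(* P_O^(A,B)(x), with Inf {} = +\<infinity> *)
definition PO :: "point set \<Rightarrow> (point \<Rightarrow> real) \<Rightarrow> (point \<Rightarrow> real) \<Rightarrow> point \<Rightarrow> ereal" where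
  "PO D A B x = Inf {ereal (L A B Rs / of_int (- multR Rs x)) | Rs. is_union D Rs \<and> multR Rs x < 0}"

end

theory Submission
  imports Defs
begin

definition gg :: "(point \<Rightarrow> real) \<Rightarrow> (point \<Rightarrow> real) \<Rightarrow> point \<Rightarrow> real \<Rightarrow> real" where
  "gg A B y t = (if t > 0 then B y * t else A y * t)"

lemma multR_Nil[simp]: "multR [] y = 0" by (simp add: multR_def)
lemma multR_Cons[simp]: "multR (R#Rs) y = mult1 R y + multR Rs y" by (simp add: multR_def)
lemma multR_append[simp]: "multR (xs@ys) y = multR xs y + multR ys y"
  by (induction xs) auto
lemma multR_rep[simp]: "multR (replicate n R) y = int n * mult1 R y"
  by (induction n) (auto simp: algebra_simps)
lemma multR_concrep[simp]: "multR (concat (replicate n Rs)) y = int n * multR Rs y"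
  by (induction n) (auto simp: algebra_simps)

lemma corners_Nil[simp]: "corners [] = {}" by (simp add: corners_def)
lemma corners_Cons: "corners (R#Rs) = (case R of ((s1,s2),(t1,t2)) \<Rightarrow>
      {(s1,t1),(s2,t2),(s2,t1),(s1,t2)}) \<union> corners Rs" by (simp add: corners_def)
lemma corners_append[simp]: "corners (xs@ys) = corners xs \<union> corners ys"
  by (simp add: corners_def)
lemma corners_concrep: "n > 0 \<Longrightarrow> corners (concat (replicate n Rs)) = corners Rs"
  by (induction n) (auto simp: corners_def)
lemma corners_rep: "n > 0 \<Longrightarrow> corners (replicate n R) = corners [R]"
  by (induction n) (auto simp: corners_def)

lemma corners_fin[simp]: "finite (corners Rs)"
  by (induction Rs) (auto simp: corners_Cons split: prod.splits)

lemma mult1_zero: "y \<notin> corners [R] \<Longrightarrow> mult1 R y = 0"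
  by (auto simp: corners_def mult1_def split: prod.splits)

lemma multR_zero: "y \<notin> corners Rs \<Longrightarrow> multR Rs y = 0"
proof (induction Rs)
  case (Cons R Rs)
  have "y \<notin> corners [R]" "y \<notin> corners Rs" using Cons.prems corners_Cons[of R Rs] corners_Cons[of R "[]"] by auto
  then show ?case using Cons.IH mult1_zero by simp
qed simp

lemma L_eq:
  assumes "finite S" "corners Rs \<subseteq> S"
  shows "L A B Rs = (\<Sum>y\<in>S. gg A B y (of_int (multR Rs y)))"
proof -
  have "(\<Sum>y\<in>S. gg A B y (of_int (multR Rs y))) = (\<Sum>y\<in>corners Rs. gg A B y (of_int (multR Rs y)))"
    by (rule sum.mono_neutral_right[OF assms]) (auto simp: multR_zero gg_def)
  also have "\<dots> = (\<Sum>y\<in>corners Rs. (if multR Rs y > 0 then B y * of_int (multR Rs y) else 0)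
      + (if multR Rs y < 0 then A y * of_int (multR Rs y) else 0))"
    by (rule sum.cong) (auto simp: gg_def)
  also have "\<dots> = L A B Rs"
    unfolding L_def sum.distrib by (simp add: sum.inter_filter)
  finally show ?thesis by simp
qed

lemma gg_sub: assumes "A y \<le> B y " shows "gg A B y (a + b) \<le> gg A B y a + gg A B y b"
proof -
  have "b \<le> 0 \<Longrightarrow> b * B y \<le> b * A y" for b using assms by (simp add: mult_left_mono_neg)
  then show ?thesis using assms by (auto simp: gg_def algebra_simps mult_right_mono)
qed

lemma gg_hom: "k \<ge> 0 \<Longrightarrow> gg A B y (k * t) = k * gg A B y t"
  by (auto simp: gg_def zero_less_mult_iff)

lemma corner_choice:
  assumes "A x \<le> B x" "min (PO D A B x) (ereal (B x - A x)) = 0" "eps > 0"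
  shows "\<exists>Rs d k. k > 0 \<and> (Rs = [] \<or> is_union D Rs) \<and> multR Rs x = d
     \<and> (d = - int k \<or> (d = 0 \<and> A x = B x)) \<and> L A B Rs \<le> eps * real k"
proof (cases "A x = B x")
  case True
  have "L A B [] = 0" by (simp add: L_def)
  then show ?thesis using True assms by (intro exI[of _ "[]"] exI[of _ 0] exI[of _ 1]) auto
next
  case False
  then have "ereal (B x - A x) > 0" using assms(1) by simp
  then have "PO D A B x = 0" using assms(2) by (auto simp: min_def split: if_splits)
  then have "Inf {ereal (L A B Rs / of_int (- multR Rs x)) | Rs. is_union D Rs \<and> multR Rs x < 0} < ereal eps"
    using assms(3) by (simp add: PO_def)
  then obtain z where "z \<in> {ereal (L A B Rs / of_int (- multR Rs x)) | Rs. is_union D Rs \<and> multR Rs x < 0}" "z < ereal eps"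
    using Inf_less_iff by blast
  then obtain Rs where Rs: "is_union D Rs" "multR Rs x < 0" "L A B Rs / of_int (- multR Rs x) < eps" by auto
  define k where "k = nat (- multR Rs x)"
  have k: "int k = - multR Rs x" "k > 0" using Rs(2) by (auto simp: k_def)
  have "real k > 0" using k by simp
  have "real k = of_int (- multR Rs x)" using k(1) by (metis of_int_of_nat_eq)
  then have "L A B Rs / real k < eps" using Rs(3) by simp
  then have "L A B Rs < eps * real k" using \<open>real k > 0\<close>
    by (simp add: pos_divide_less_eq)
  then show ?thesis using Rs k by (intro exI[of _ Rs] exI[of _ "multR Rs x"] exI[of _ k]) auto
qed

lemma sum_drop_point:
  fixes f h :: "'a \<Rightarrow> real"
  assumes "finite S" "x \<in> S" "\<And>y. y \<noteq> x \<Longrightarrow> f y = h y" "f x = 0"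
  shows "(\<Sum>y\<in>S. f y) = (\<Sum>y\<in>S. h y) - h x"
proof -
  have "(\<Sum>y\<in>S. f y) = f x + (\<Sum>y\<in>S-{x}. f y)" by (rule sum.remove[OF assms(1,2)])
  also have "\<dots> = (\<Sum>y\<in>S-{x}. h y)" using assms(4) sum.cong[of "S-{x}" "S-{x}" f h] assms(3) by simp
  also have "(\<Sum>y\<in>S. h y) = h x + (\<Sum>y\<in>S-{x}. h y)" by (rule sum.remove[OF assms(1,2)])
  ultimately show ?thesis by simp
qed

theorem mainTheorem13:
  fixes D :: "point set" and A B :: "point \<Rightarrow> real"
  assumes "D = {0..1} \<times> {0..1} \<or> is_mesh D"
    and Q1: "\<forall>x\<in>D. A x \<le> B x"
    and Q2: "\<forall>Rs. is_union D Rs \<longrightarrow> L A B Rs \<ge> 0"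
    and "\<forall>x\<in>D. min (PO D A B x) (ereal (B x - A x)) = 0"
  shows "\<forall>R. is_rect D R \<longrightarrow> V A R \<ge> 0"
proof (intro allI impI)
  fix R assume isr: "is_rect D R"
  obtain s1 s2 t1 t2 where Rdef: "R = ((s1,s2),(t1,t2))" by (metis prod.collapse)
  define x1 where "x1 = (s1,t1)"
  define x2 where "x2 = (s2,t2)"
  define o1 where "o1 = (s2,t1)"
  define o2 where "o2 = (s1,t2)"
  have lt: "s1 < s2" "t1 < t2" and inD: "x1 \<in> D" "x2 \<in> D" "o1 \<in> D" "o2 \<in> D"
    using isr by (auto simp: is_rect_def Rdef x1_def x2_def o1_def o2_def)
  have dist: "x1 \<noteq> x2" "x1 \<noteq> o1" "x1 \<noteq> o2" "x2 \<noteq> o1" "x2 \<noteq> o2" "o1 \<noteq> o2"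
    using lt by (auto simp: x1_def x2_def o1_def o2_def)
  have mR: "\<And>y. mult1 R y = (if y = x1 \<or> y = x2 then 1 else if y = o1 \<or> y = o2 then -1 else 0)"
    by (simp add: mult1_def Rdef x1_def x2_def o1_def o2_def)
  have cR: "corners [R] = {x1,x2,o1,o2}"
    by (auto simp: corners_def Rdef x1_def x2_def o1_def o2_def)
  have VA: "V A R = A x1 + A x2 - A o1 - A o2"
    by (simp add: V_def Rdef x1_def x2_def o1_def o2_def)
  show "V A R \<ge> 0"
  proof (rule ccontr)
    assume "\<not> V A R \<ge> 0"
    then have Vneg: "V A R < 0" by simp
    define eps where "eps = - V A R / 4"
    have eps: "eps > 0" using Vneg by (simp add: eps_def)
    have q1: "A x1 \<le> B x1" "min (PO D A B x1) (ereal (B x1 - A x1)) = 0" using Q1 assms(4) inD by auto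
    obtain R1 d1 k1 where c1: "k1 > 0" "R1 = [] \<or> is_union D R1" "multR R1 x1 = d1"
      "d1 = - int k1 \<or> (d1 = 0 \<and> A x1 = B x1)" "L A B R1 \<le> eps * real k1"
      using corner_choice[OF q1 eps] by (elim exE conjE) (metis that)
    have q2: "A x2 \<le> B x2" "min (PO D A B x2) (ereal (B x2 - A x2)) = 0" using Q1 assms(4) inD by auto
    obtain R2 d2 k2 where c2: "k2 > 0" "R2 = [] \<or> is_union D R2" "multR R2 x2 = d2"
      "d2 = - int k2 \<or> (d2 = 0 \<and> A x2 = B x2)" "L A B R2 \<le> eps * real k2"
      using corner_choice[OF q2 eps] by (elim exE conjE) (metis that)
    define K where "K = k1 * k2"
    have K: "K > 0" using c1 c2 by (simp add: K_def)
    define Rs where "Rs = replicate K R @ concat (replicate k2 R1) @ concat (replicate k1 R2)"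
    have setR1: "set (concat (replicate k2 R1)) \<subseteq> set R1" by (induction k2) auto
    have setR2: "set (concat (replicate k1 R2)) \<subseteq> set R2" by (induction k1) auto
    have un: "is_union D Rs"
      using K isr c1(2) c2(2) setR1 setR2 unfolding is_union_def Rs_def by (cases K) auto
    define S where "S = corners Rs"
    have finS: "finite S" by (simp add: S_def)
    have cRs: "corners [R] \<subseteq> S" "corners R1 \<subseteq> S" "corners R2 \<subseteq> S"
      using K c1(1) c2(1) by (auto simp: S_def Rs_def corners_rep corners_concrep)
    have SD: "S \<subseteq> D"
      using un unfolding S_def is_union_def corners_def is_rect_def by (force split: prod.splits)
    have pts: "x1 \<in> S" "x2 \<in> S" "o1 \<in> S" "o2 \<in> S" using cRs(1) cR by auto
    let ?g = "gg A B"
    define m1 where "m1 y = real_of_int (multR R1 y)" for y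
    define m2 where "m2 y = real_of_int (multR R2 y)" for y
    define u where "u y = real K * real_of_int (mult1 R y) + (if y = x1 then real k2 * d1 else 0)
        + (if y = x2 then real k1 * d2 else 0)" for y
    define w1 where "w1 y = m1 y - (if y = x1 then d1 else 0)" for y
    define w2 where "w2 y = m2 y - (if y = x2 then d2 else 0)" for y
    have mdec: "real_of_int (multR Rs y) = u y + real k2 * w1 y + real k1 * w2 y" for y
      by (simp add: Rs_def u_def w1_def w2_def m1_def m2_def algebra_simps)
    have "0 \<le> L A B Rs" using Q2 un by blast
    also have "L A B Rs = (\<Sum>y\<in>S. ?g y (u y + real k2 * w1 y + real k1 * w2 y))"
      using L_eq[OF finS, of Rs A B] by (simp add: S_def mdec)
    also have "\<dots> \<le> (\<Sum>y\<in>S. ?g y (u y) + ?g y (real k2 * w1 y) + ?g y (real k1 * w2 y))"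
    proof (rule sum_mono)
      fix y assume "y \<in> S"
      then have "A y \<le> B y" using SD Q1 by auto
      then show "?g y (u y + real k2 * w1 y + real k1 * w2 y) \<le> ?g y (u y) + ?g y (real k2 * w1 y) + ?g y (real k1 * w2 y)"
        using gg_sub[of A y B "u y + real k2 * w1 y" "real k1 * w2 y"] gg_sub[of A y B "u y" "real k2 * w1 y"]
        by linarith
    qed
    also have "\<dots> = (\<Sum>y\<in>S. ?g y (u y)) + real k2 * (\<Sum>y\<in>S. ?g y (w1 y)) + real k1 * (\<Sum>y\<in>S. ?g y (w2 y))"
      by (simp add: sum.distrib gg_hom sum_distrib_left)
    finally have main: "0 \<le> (\<Sum>y\<in>S. ?g y (u y)) + real k2 * (\<Sum>y\<in>S. ?g y (w1 y)) + real k1 * (\<Sum>y\<in>S. ?g y (w2 y))" .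
    have d1le: "d1 \<le> 0" "d2 \<le> 0" using c1(4) c2(4) by auto
    have sw1: "(\<Sum>y\<in>S. ?g y (w1 y)) = L A B R1 - A x1 * d1"
    proof -
      have "(\<Sum>y\<in>S. ?g y (w1 y)) = (\<Sum>y\<in>S. ?g y (m1 y)) - ?g x1 (m1 x1)"
        by (rule sum_drop_point[OF finS pts(1)]) (auto simp: w1_def m1_def c1(3) gg_def)
      moreover have "(\<Sum>y\<in>S. ?g y (m1 y)) = L A B R1" using L_eq[OF finS cRs(2)] by (simp add: m1_def)
      moreover have "?g x1 (m1 x1) = A x1 * d1" using d1le by (simp add: gg_def m1_def c1(3))
      ultimately show ?thesis by simp
    qed
    have sw2: "(\<Sum>y\<in>S. ?g y (w2 y)) = L A B R2 - A x2 * d2"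
    proof -
      have "(\<Sum>y\<in>S. ?g y (w2 y)) = (\<Sum>y\<in>S. ?g y (m2 y)) - ?g x2 (m2 x2)"
        by (rule sum_drop_point[OF finS pts(2)]) (auto simp: w2_def m2_def c2(3) gg_def)
      moreover have "(\<Sum>y\<in>S. ?g y (m2 y)) = L A B R2" using L_eq[OF finS cRs(3)] by (simp add: m2_def)
      moreover have "?g x2 (m2 x2) = A x2 * d2" using d1le by (simp add: gg_def m2_def c2(3))
      ultimately show ?thesis by simp
    qed
    have su: "(\<Sum>y\<in>S. ?g y (u y)) = (\<Sum>y\<in>{x1,x2,o1,o2}. ?g y (u y))"
      by (rule sum.mono_neutral_right[OF finS]) (use pts in \<open>auto simp: u_def mR gg_def\<close>)
    have gx1: "?g x1 (u x1) = A x1 * (real K + real k2 * d1)"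
      using c1(4) dist by (auto simp: u_def mR gg_def K_def)
    have gx2: "?g x2 (u x2) = A x2 * (real K + real k1 * d2)"
      using c2(4) dist by (auto simp: u_def mR gg_def K_def)
    have go1: "?g o1 (u o1) = - A o1 * real K" using dist K by (auto simp: u_def mR gg_def)
    have go2: "?g o2 (u o2) = - A o2 * real K" using dist K by (auto simp: u_def mR gg_def)
    have su2: "(\<Sum>y\<in>S. ?g y (u y)) = A x1 * (real K + real k2 * d1) + A x2 * (real K + real k1 * d2)
        - A o1 * real K - A o2 * real K"
      using su dist gx1 gx2 go1 go2 by simp
    have "0 \<le> real K * V A R + real k2 * L A B R1 + real k1 * L A B R2"
      using main su2 sw1 sw2 unfolding VA K_def by (simp add: algebra_simps)
    also have "\<dots> \<le> real K * V A R + real k2 * (eps * real k1) + real k1 * (eps * real k2)"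
      using c1(5) c2(5) by (intro add_mono mult_left_mono) auto
    also have "\<dots> = real K * (V A R / 2)" by (simp add: K_def eps_def algebra_simps)
    also have "\<dots> < 0" using K Vneg by (simp add: mult_pos_neg)
    finally show False by simp
  qed
qed

end
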